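(* Let $J$ be a cone with joins and $A,\tilde A\subset J\times J$ be such that $v\le w$ for every $(v,w)\in A$, and $v+\tilde v\le w+\tilde w$ for every $(v,w)\in A$ and $(\tilde v,\tilde w)\in\tilde A$. Then $x:=\inf_{(v,w)\in A}(w-v)$ satisfies $v+x\le w$ and $\tilde v\le\tilde w+x$ for all $(v,w)\in A$, $(\tilde v,\tilde w)\in\tilde A$.
   Context: A prewedge is a set $W$ with a commutative associative addition with neutral element $0$ and a multiplication $[0,\infty)\times W\to W$ such that $\lambda(\eta v)=(\lambda\eta)v$, $0v=0$, $1v=v$, $(\lambda+\eta)v=\lambda v+\eta v$, $\lambda(v+w)=\lambda v+\lambda w$; it carries the preorder $v\le w$ iff $v+z=w$ for some $z$. A wedge is a prewedge in which $\le$ is antisymmetric and $v=\sup_{\eta<1}\eta v$ for every $v$. A cone is a wedge in which every directed subset has a supremum. A cone with joins is a cone $J$ in which every subset $A$ has an infimum and $\inf(v+A)=v+\inf A$ for all $v\in J$, $A\subset J$. For $v\le w$ in a cone with joins, $w-v:=\max\{z\in J: v+z=w\}$ (this maximum exists). The infimum of the empty family is the maximum $\infty$ of $J$. *)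

theory Defs
  imports Complex_Main
begin

definition prewedge :: "('a \<Rightarrow> 'a \<Rightarrow> 'a) \<Rightarrow> 'a \<Rightarrow> (real \<Rightarrow> 'a \<Rightarrow> 'a) \<Rightarrow> bool" where
  "prewedge add zero smult \<longleftrightarrow>
     (\<forall>v w. add v w = add w v) \<and>
     (\<forall>u v w. add (add u v) w = add u (add v w)) \<and>
     (\<forall>v. add v zero = v) \<and>
     (\<forall>l e v. 0 \<le> l \<longrightarrow> 0 \<le> e \<longrightarrow> smult l (smult e v) = smult (l * e) v) \<and>
     (\<forall>v. smult 0 v = zero) \<and>
     (\<forall>v. smult 1 v = v) \<and>
     (\<forall>l e v. 0 \<le> l \<longrightarrow> 0 \<le> e \<longrightarrow> smult (l + e) v = add (smult l v) (smult e v)) \<and>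
     (\<forall>l v w. 0 \<le> l \<longrightarrow> smult l (add v w) = add (smult l v) (smult l w))"

definition wle :: "('a \<Rightarrow> 'a \<Rightarrow> 'a) \<Rightarrow> 'a \<Rightarrow> 'a \<Rightarrow> bool" where
  "wle add v w \<longleftrightarrow> (\<exists>z. add v z = w)"

definition is_sup :: "('a \<Rightarrow> 'a \<Rightarrow> 'a) \<Rightarrow> 'a set \<Rightarrow> 'a \<Rightarrow> bool" where
  "is_sup add S s \<longleftrightarrow> (\<forall>x\<in>S. wle add x s) \<and> (\<forall>u. (\<forall>x\<in>S. wle add x u) \<longrightarrow> wle add s u)"

definition is_inf :: "('a \<Rightarrow> 'a \<Rightarrow> 'a) \<Rightarrow> 'a set \<Rightarrow> 'a \<Rightarrow> bool" where
  "is_inf add S s \<longleftrightarrow> (\<forall>x\<in>S. wle add s x) \<and> (\<forall>u. (\<forall>x\<in>S. wle add u x) \<longrightarrow> wle add u s)"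

definition wedge :: "('a \<Rightarrow> 'a \<Rightarrow> 'a) \<Rightarrow> 'a \<Rightarrow> (real \<Rightarrow> 'a \<Rightarrow> 'a) \<Rightarrow> bool" where
  "wedge add zero smult \<longleftrightarrow> prewedge add zero smult \<and>
     (\<forall>v w. wle add v w \<longrightarrow> wle add w v \<longrightarrow> v = w) \<and>
     (\<forall>v. is_sup add {smult e v | e. 0 \<le> e \<and> e < 1} v)"

definition directed :: "('a \<Rightarrow> 'a \<Rightarrow> 'a) \<Rightarrow> 'a set \<Rightarrow> bool" where
  "directed add D \<longleftrightarrow> D \<noteq> {} \<and> (\<forall>x\<in>D. \<forall>y\<in>D. \<exists>z\<in>D. wle add x z \<and> wle add y z)"

definition cone :: "('a \<Rightarrow> 'a \<Rightarrow> 'a) \<Rightarrow> 'a \<Rightarrow> (real \<Rightarrow> 'a \<Rightarrow> 'a) \<Rightarrow> bool" where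
  "cone add zero smult \<longleftrightarrow> wedge add zero smult \<and>
     (\<forall>D. directed add D \<longrightarrow> (\<exists>s. is_sup add D s))"

text \<open>Infimum (unique in a wedge by antisymmetry).\<close>
definition winf :: "('a \<Rightarrow> 'a \<Rightarrow> 'a) \<Rightarrow> 'a set \<Rightarrow> 'a" where
  "winf add S = (THE s. is_inf add S s)"

definition cone_with_joins :: "('a \<Rightarrow> 'a \<Rightarrow> 'a) \<Rightarrow> 'a \<Rightarrow> (real \<Rightarrow> 'a \<Rightarrow> 'a) \<Rightarrow> bool" where
  "cone_with_joins add zero smult \<longleftrightarrow> cone add zero smult \<and>
     (\<forall>S. \<exists>s. is_inf add S s) \<and>
     (\<forall>v S. winf add (add v ` S) = add v (winf add S))"

definition wminus :: "('a \<Rightarrow> 'a \<Rightarrow> 'a) \<Rightarrow> 'a \<Rightarrow> 'a \<Rightarrow> 'a" where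
  "wminus add w v = (THE z. add v z = w \<and> (\<forall>z'. add v z' = w \<longrightarrow> wle add z' z))"

end

theory Submission
  imports Defs
begin

context
  fixes add :: "'a \<Rightarrow> 'a \<Rightarrow> 'a" and zero :: 'a and smult :: "real \<Rightarrow> 'a \<Rightarrow> 'a"
  assumes J: "cone_with_joins add zero smult"
begin

lemma PW: "prewedge add zero smult"
  using J unfolding cone_with_joins_def cone_def wedge_def by blast

lemma comm: "add v w = add w v" using PW unfolding prewedge_def by blast
lemma assoc: "add (add u v) w = add u (add v w)" using PW unfolding prewedge_def by blast
lemma zr: "add v zero = v" using PW unfolding prewedge_def by blast
lemma sm_assoc: "0 \<le> l \<Longrightarrow> 0 \<le> e \<Longrightarrow> smult l (smult e v) = smult (l * e) v"
  using PW unfolding prewedge_def by blast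
lemma sm0: "smult 0 v = zero" using PW unfolding prewedge_def by blast
lemma sm1: "smult 1 v = v" using PW unfolding prewedge_def by blast
lemma sm_distl: "0 \<le> l \<Longrightarrow> 0 \<le> e \<Longrightarrow> smult (l + e) v = add (smult l v) (smult e v)"
  using PW unfolding prewedge_def by blast
lemma sm_distr: "0 \<le> l \<Longrightarrow> smult l (add v w) = add (smult l v) (smult l w)"
  using PW unfolding prewedge_def by blast
lemma antisym: "wle add v w \<Longrightarrow> wle add w v \<Longrightarrow> v = w"
  using J unfolding cone_with_joins_def cone_def wedge_def by blast
lemma wsup: "is_sup add {smult e v | e. 0 \<le> e \<and> e < 1} v"
  using J unfolding cone_with_joins_def cone_def wedge_def by blast
lemma dsup: "directed add D \<Longrightarrow> \<exists>s. is_sup add D s"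
  using J unfolding cone_with_joins_def cone_def by blast
lemma infex: "\<exists>s. is_inf add S s"
  using J unfolding cone_with_joins_def by blast
lemma infd: "winf add (add v ` S) = add v (winf add S)"
  using J unfolding cone_with_joins_def by blast

lemma le_refl: "wle add v v" using zr unfolding wle_def by blast
lemma le_trans: "wle add u v \<Longrightarrow> wle add v w \<Longrightarrow> wle add u w"
  unfolding wle_def by (metis assoc)
lemma le_add: "wle add v (add v z)" unfolding wle_def by blast
lemma le_mono: "wle add a b \<Longrightarrow> wle add (add c a) (add c b)"
  unfolding wle_def by (metis assoc)
lemma le_monor: "wle add a b \<Longrightarrow> wle add (add a c) (add b c)"
  using le_mono comm by metis
lemma le_smult: "0 \<le> l \<Longrightarrow> wle add a b \<Longrightarrow> wle add (smult l a) (smult l b)"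
  unfolding wle_def by (metis sm_distr)
lemma smult_le1: assumes "0 \<le> m" "m \<le> 1" shows "wle add (smult m v) v"
proof -
  have "v = smult (m + (1 - m)) v" using sm1 by simp
  also have "\<dots> = add (smult m v) (smult (1 - m) v)" using assms sm_distl[of m "1 - m" v] by simp
  finally show ?thesis unfolding wle_def by metis
qed

lemma winf_is_inf: "is_inf add S (winf add S)"
proof -
  obtain s where s: "is_inf add S s" using infex by blast
  have "\<And>t. is_inf add S t \<Longrightarrow> t = s"
    using s antisym unfolding is_inf_def by blast
  then show ?thesis unfolding winf_def using s by (metis theI)
qed
lemma winf_eq: "is_inf add S s \<Longrightarrow> winf add S = s"
  using winf_is_inf antisym unfolding is_inf_def by blast
lemma winf_lower: "x \<in> S \<Longrightarrow> wle add (winf add S) x"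
  using winf_is_inf unfolding is_inf_def by blast
lemma winf_greatest: "(\<forall>x\<in>S. wle add u x) \<Longrightarrow> wle add u (winf add S)"
  using winf_is_inf unfolding is_inf_def by blast

lemma inf_pair: assumes "add v a = c" "add v b = c" shows "add v (winf add {a,b}) = c"
proof -
  have "add v ` {a,b} = {c}" using assms by auto
  moreover have "winf add {c} = c" by (rule winf_eq) (simp add: is_inf_def le_refl)
  ultimately show ?thesis using infd[of v "{a,b}"] by simp
qed

lemma sup_P: "\<exists>s. add w s = w \<and> (\<forall>p. add w p = w \<longrightarrow> wle add p s)"
proof -
  let ?P = "{p. add w p = w}"
  have dir: "directed add ?P" unfolding directed_def
  proof (intro conjI ballI)
    show "?P \<noteq> {}" using zr by auto
  next
    fix x y assume "x \<in> ?P" "y \<in> ?P"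
    then have "add x y \<in> ?P" by (simp add: assoc[symmetric])
    moreover have "wle add x (add x y)" "wle add y (add x y)" using le_add comm by metis+
    ultimately show "\<exists>z\<in>?P. wle add x z \<and> wle add y z" by blast
  qed
  obtain s where s: "is_sup add ?P s" using dsup[OF dir] by blast
  have ub: "\<And>p. add w p = w \<Longrightarrow> wle add p s" using s unfolding is_sup_def by blast
  have least: "\<And>u. (\<forall>p\<in>?P. wle add p u) \<Longrightarrow> wle add s u" using s unfolding is_sup_def by blast
  have sw: "wle add s w"
    by (rule least) (auto simp: wle_def comm intro!: exI[of _ w])
  have two: "\<And>p. smult 2 p = add p p" using sm_distl[of 1 1] sm1 by (metis one_add_one zero_le_one)
  have half: "\<And>p. smult (1/2) (smult 2 p) = p" using sm_assoc[of "1/2" 2] sm1 by simp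
  have "wle add s (smult (1/2) s)"
  proof (rule least, intro ballI)
    fix p assume "p \<in> ?P"
    then have "add p p \<in> ?P" by (simp add: assoc[symmetric])
    then have "wle add (add p p) s" using ub by blast
    then have "wle add (smult (1/2) (smult 2 p)) (smult (1/2) s)"
      using le_smult[of "1/2"] two by simp
    then show "wle add p (smult (1/2) s)" using half by simp
  qed
  then have "wle add (smult 2 s) (smult 2 (smult (1/2) s))" using le_smult[of 2] by simp
  moreover have "smult 2 (smult (1/2) s) = s" using sm_assoc[of 2 "1/2"] sm1 by simp
  ultimately have "wle add (add s s) s" using two by simp
  then have ss: "add s s = s" using antisym le_add by blast
  obtain y where y: "add s y = w" using sw unfolding wle_def by blast
  have "add w s = w" using y ss by (metis assoc comm)
  then show ?thesis using ub by blast
qed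

lemma max_ex: assumes "wle add v w"
  shows "add v (wminus add w v) = w \<and> (\<forall>z'. add v z' = w \<longrightarrow> wle add z' (wminus add w v))"
proof -
  obtain z0 where z0: "add v z0 = w" using assms unfolding wle_def by blast
  obtain s where s1: "add w s = w" and s2: "\<And>p. add w p = w \<Longrightarrow> wle add p s" using sup_P by blast
  define m where "m = add z0 s"
  have m1: "add v m = w" unfolding m_def using z0 s1 by (metis assoc)
  have m2: "\<And>z'. add v z' = w \<Longrightarrow> wle add z' m"
  proof -
    fix z' assume z': "add v z' = w"
    define b where "b = winf add {z', z0}"
    have vb: "add v b = w" unfolding b_def using inf_pair z' z0 by blast
    have "wle add b z'" unfolding b_def by (rule winf_lower) simp
    then obtain q where q: "add b q = z'" unfolding wle_def by blast
    have "add w q = w" using vb q z' by (metis assoc)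
    then have "wle add q s" by (rule s2)
    then have "wle add z' (add b s)" using le_mono q by metis
    moreover have "wle add b z0" unfolding b_def by (rule winf_lower) simp
    then have "wle add (add b s) m" unfolding m_def by (rule le_monor)
    ultimately show "wle add z' m" by (rule le_trans)
  qed
  have "wminus add w v = m" unfolding wminus_def
  proof (rule the_equality)
    show "add v m = w \<and> (\<forall>z'. add v z' = w \<longrightarrow> wle add z' m)" using m1 m2 by blast
  next
    fix x assume "add v x = w \<and> (\<forall>z'. add v z' = w \<longrightarrow> wle add z' x)"
    then show "x = m" using m1 m2 antisym by blast
  qed
  then show ?thesis using m1 m2 by simp
qed

lemma i_abs: "add v (winf add {smult \<eta> v | \<eta>. 0 < \<eta> \<and> \<eta> \<le> 1}) = v"
proof -
  let ?S = "{smult \<eta> v | \<eta>. 0 < \<eta> \<and> \<eta> \<le> 1}"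
  define m where "m = winf add (add v ` ?S)"
  have eq: "add v (winf add ?S) = m" unfolding m_def using infd by simp
  have "wle add v m" unfolding m_def by (rule winf_greatest) (auto intro: le_add)
  moreover have "wle add m v"
  proof -
    have "is_sup add {smult l m | l. 0 \<le> l \<and> l < 1} m" by (rule wsup)
    moreover have "\<forall>x\<in>{smult l m | l. 0 \<le> l \<and> l < 1}. wle add x v"
    proof
      fix x assume "x \<in> {smult l m | l. 0 \<le> l \<and> l < 1}"
      then obtain l where l: "0 \<le> l" "l < 1" "x = smult l m" by blast
      show "wle add x v"
      proof (cases "l = 0")
        case True
        then show ?thesis using l sm0 comm zr unfolding wle_def by metis
      next
        case False
        then have lp: "0 < l" using l by simp
        define e where "e = min 1 (1/l - 1)"
        have e0: "0 < e" "e \<le> 1" unfolding e_def using lp l by (auto simp: field_simps)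
        have le1: "l * (1 + e) \<le> 1"
        proof (cases "1 \<le> 1/l - 1")
          case True then have "e = 1" unfolding e_def by simp
          then show ?thesis using True lp by (simp add: field_simps)
        next
          case False then have "e = 1/l - 1" unfolding e_def by simp
          then show ?thesis using lp by (simp add: field_simps)
        qed
        have "add v (smult e v) \<in> add v ` ?S" using e0 by blast
        then have "wle add m (add v (smult e v))" unfolding m_def by (rule winf_lower)
        moreover have "add v (smult e v) = smult (1 + e) v" using sm_distl[of 1 e v] sm1 e0 by simp
        ultimately have "wle add (smult l m) (smult l (smult (1 + e) v))" using le_smult l by simp
        also have "smult l (smult (1 + e) v) = smult (l * (1 + e)) v" using sm_assoc l e0 by simp
        finally have "wle add (smult l m) (smult (l * (1 + e)) v)" .
        moreover have "wle add (smult (l * (1 + e)) v) v" using smult_le1 le1 l e0 by simp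
        ultimately show ?thesis using l le_trans by blast
      qed
    qed
    ultimately show ?thesis unfolding is_sup_def by blast
  qed
  ultimately show ?thesis using eq antisym by blast
qed

lemma core:
  assumes h1: "add (add v e) q = add v e"
    and h2: "add e (winf add {smult \<eta> v | \<eta>. 0 < \<eta> \<and> \<eta> \<le> 1}) = e"
  shows "add e q = e"
proof -
  let ?S = "{smult \<eta> v | \<eta>. 0 < \<eta> \<and> \<eta> \<le> 1}"
  have st1: "add (add v e) (smult (real n) q) = add v e" for n :: nat
  proof (induction n)
    case 0 then show ?case using sm0 zr by simp
  next
    case (Suc n)
    have "smult (real (Suc n)) q = add (smult (real n) q) q"
      using sm_distl[of "real n" 1 q] sm1 by (simp add: add.commute)
    then show ?case using Suc h1 by (metis assoc)
  qed
  have st2: "add (add v e) (smult c q) = add v e" if c: "0 \<le> c" for c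
  proof -
    obtain n :: nat where n: "c \<le> real n" using real_arch_simple by blast
    have "smult (real n) q = add (smult c q) (smult (real n - c) q)"
      using sm_distl[of c "real n - c" q] c n by simp
    then have "wle add (add (add v e) (smult c q)) (add (add v e) (smult (real n) q))"
      using le_mono le_add by metis
    then have "wle add (add (add v e) (smult c q)) (add v e)" using st1 by simp
    then show ?thesis using antisym le_add by blast
  qed
  have st3: "add (smult \<eta> v) (add e q) = add (smult \<eta> v) e" if "0 < \<eta>" "\<eta> \<le> 1" for \<eta>
  proof -
    have "add (add v e) (smult (1/\<eta>) q) = add v e" using st2 that by simp
    then have "smult \<eta> (add (add v e) (smult (1/\<eta>) q)) = smult \<eta> (add v e)" by simp
    moreover have "smult \<eta> (smult (1/\<eta>) q) = q" using sm_assoc[of \<eta> "1/\<eta>" q] that sm1 by simp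
    ultimately have A: "add (add (smult \<eta> v) (smult \<eta> e)) q = add (smult \<eta> v) (smult \<eta> e)"
      using sm_distr that by simp
    have E: "e = add (smult \<eta> e) (smult (1 - \<eta>) e)"
      using sm_distl[of \<eta> "1 - \<eta>" e] sm1 that by simp
    have "add (smult \<eta> v) (add e q)
        = add (smult \<eta> v) (add (add (smult \<eta> e) (smult (1 - \<eta>) e)) q)" by (simp only: E[symmetric])
    also have "\<dots> = add (smult \<eta> v) (add (smult \<eta> e) (add (smult (1 - \<eta>) e) q))"
      by (simp add: assoc)
    also have "\<dots> = add (smult \<eta> v) (add (smult \<eta> e) (add q (smult (1 - \<eta>) e)))"
      using comm[of q] by simp
    also have "\<dots> = add (add (add (smult \<eta> v) (smult \<eta> e)) q) (smult (1 - \<eta>) e)"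
      by (simp add: assoc)
    also have "\<dots> = add (add (smult \<eta> v) (smult \<eta> e)) (smult (1 - \<eta>) e)" using A by simp
    also have "\<dots> = add (smult \<eta> v) e" by (simp only: assoc E[symmetric])
    finally show ?thesis .
  qed
  have img: "add (add e q) ` ?S = add e ` ?S"
  proof -
    have "\<And>x. x \<in> ?S \<Longrightarrow> add (add e q) x = add e x"
    proof -
      fix x assume "x \<in> ?S"
      then obtain \<eta> where "0 < \<eta>" "\<eta> \<le> 1" "x = smult \<eta> v" by blast
      then have "add x (add e q) = add x e" using st3 by simp
      then show "add (add e q) x = add e x" using comm[of x] by simp
    qed
    then show ?thesis by (intro image_cong) auto
  qed
  have "add (add e q) (winf add ?S) = add (add e (winf add ?S)) q"
    using assoc comm by metis
  then have "add e q = add (add e q) (winf add ?S)" using h2 by simp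
  also have "\<dots> = winf add (add (add e q) ` ?S)" using infd by simp
  also have "\<dots> = winf add (add e ` ?S)" using img by simp
  also have "\<dots> = e" using infd h2 by simp
  finally show ?thesis .
qed

lemma keyK:
  assumes vw: "wle add v w" and cr: "wle add (add v vt) (add w wt)"
  shows "wle add vt (add wt (wminus add w v))"
proof -
  define d where "d = wminus add w v"
  have d1: "add v d = w" and d2: "\<And>z'. add v z' = w \<Longrightarrow> wle add z' d"
    using max_ex[OF vw] unfolding d_def by blast+
  let ?S = "{smult \<eta> v | \<eta>. 0 < \<eta> \<and> \<eta> \<le> 1}"
  define i where "i = winf add ?S"
  have vi: "add v i = v" unfolding i_def by (rule i_abs)
  obtain k where k: "add (add v vt) k = add w wt" using cr unfolding wle_def by blast
  define a where "a = add vt k"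
  define e where "e = add d wt"
  have ae: "add v a = add v e" unfolding a_def e_def using k d1 by (metis assoc)
  define h where "h = winf add {a, e}"
  have vh: "add v h = add v a" unfolding h_def using inf_pair ae by metis
  have "wle add h a" unfolding h_def by (rule winf_lower) simp
  then obtain q where q: "add h q = a" unfolding wle_def by blast
  have "wle add h e" unfolding h_def by (rule winf_lower) simp
  then obtain r where r: "add h r = e" unfolding wle_def by blast
  have h1: "add (add v e) q = add v e"
  proof -
    have "add (add v h) q = add v h" using vh q by (metis assoc)
    then have "add (add (add v h) q) r = add (add v h) r" by simp
    then show ?thesis using r by (metis assoc comm)
  qed
  have wi: "add w i = w" using d1 vi by (metis assoc comm)
  have "add v (add d i) = w" using d1 wi by (metis assoc)
  then have "wle add (add d i) d" by (rule d2)
  then have di: "add d i = d" using antisym le_add by blast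
  have h2: "add e i = e" unfolding e_def using di by (metis assoc comm)
  have eq: "add e q = e" using core[OF h1] h2 unfolding i_def by blast
  have "wle add vt a" unfolding a_def by (rule le_add)
  have "wle add a (add e q)" using \<open>wle add h e\<close> q le_monor by metis
  then have "wle add vt (add e q)" using \<open>wle add vt a\<close> le_trans by blast
  then show ?thesis using eq unfolding e_def d_def by (metis comm)
qed

end

theorem mainTheorem12:
  fixes add :: "'a \<Rightarrow> 'a \<Rightarrow> 'a" and zero :: 'a and smult :: "real \<Rightarrow> 'a \<Rightarrow> 'a"
    and A At :: "('a \<times> 'a) set"
  assumes J: "cone_with_joins add zero smult"
    and le: "\<forall>(v, w)\<in>A. wle add v w"
    and cross: "\<forall>(v, w)\<in>A. \<forall>(vt, wt)\<in>At. wle add (add v vt) (add w wt)"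
  shows "\<forall>(v, w)\<in>A. \<forall>(vt, wt)\<in>At.
           wle add (add v (winf add ((\<lambda>(v, w). wminus add w v) ` A))) w \<and>
           wle add vt (add wt (winf add ((\<lambda>(v, w). wminus add w v) ` A)))"
proof (intro ballI, clarify)
  let ?S = "(\<lambda>(v, w). wminus add w v) ` A"
  fix v w vt wt assume vw: "(v, w) \<in> A" and t: "(vt, wt) \<in> At"
  have "wle add (winf add ?S) (wminus add w v)"
    using vw by (intro winf_lower[OF J]) force
  then have "wle add (add v (winf add ?S)) (add v (wminus add w v))" by (rule le_mono[OF J])
  moreover have "add v (wminus add w v) = w" using max_ex[OF J] le vw by blast
  ultimately have 1: "wle add (add v (winf add ?S)) w" by simp
  have "\<forall>x\<in>add wt ` ?S. wle add vt x"
  proof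
    fix x assume "x \<in> add wt ` ?S"
    then obtain v' w' where "(v', w') \<in> A" "x = add wt (wminus add w' v')" by auto
    then show "wle add vt x" using keyK[OF J] le cross t by blast
  qed
  then have "wle add vt (winf add (add wt ` ?S))" by (rule winf_greatest[OF J])
  then have 2: "wle add vt (add wt (winf add ?S))" using infd[OF J] by simp
  show "wle add (add v (winf add ?S)) w \<and> wle add vt (add wt (winf add ?S))" using 1 2 by blast
qed

end
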